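(* Let $n\ge 3$, $c\ge 1$, and let $\upsilon':UV_n(c)\to\mathrm{GL}_n(\mathbb{C})$ be the representation \[ \upsilon'(\rho_i)=\mathrm{diag}\Big(I_{i-1},\begin{pmatrix}0&1\\ 1&0\end{pmatrix},I_{n-i-1}\Big),\qquad \upsilon'(\sigma_{i,t})=\mathrm{diag}\Big(I_{i-1},\begin{pmatrix}s_{1,t}&s_{2,t}\\ s_{3,t}&s_{4,t}\end{pmatrix},I_{n-i-1}\Big) \] for $1\le i\le n-1$, $1\le t\le c$, where $s_{j,t}\in\mathbb{C}$ with $s_{1,t}s_{4,t}-s_{2,t}s_{3,t}\neq0$. Then $\upsilon'$ is reducible if and only if either $s_{1,t}+s_{2,t}=1$ and $s_{3,t}+s_{4,t}=1$ for all $1\le t\le c$, or $s_{1,t}+s_{3,t}=1$ and $s_{2,t}+s_{4,t}=1$ for all $1\le t\le c$.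
   Context: $UV_n(c)$ is the group with generators $\rho_i$ ($1\le i\le n-1$), $\sigma_{i,t}$ ($1\le i\le n-1$, $1\le t\le c$) and relations $\rho_i\rho_{i+1}\rho_i=\rho_{i+1}\rho_i\rho_{i+1}$, $\rho_i\rho_j=\rho_j\rho_i$ ($|i-j|\ge2$), $\rho_i^2=1$, $\sigma_{i,t}\sigma_{j,\ell}=\sigma_{j,\ell}\sigma_{i,t}$ ($|i-j|\ge2$), $\sigma_{i,t}\rho_j=\rho_j\sigma_{i,t}$ ($|i-j|\ge2$), $\rho_i\rho_{i+1}\sigma_{i,t}=\sigma_{i+1,t}\rho_i\rho_{i+1}$ ($1\le i\le n-2$). $\mathrm{diag}(\cdot,\cdot,\cdot)$ denotes a block diagonal matrix and $I_r$ the $r\times r$ identity. A representation is reducible if $\mathbb{C}^n$ has a nonzero proper subspace invariant under all the image matrices. *)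

theory Defs
  imports Complex_Main "Jordan_Normal_Form.Matrix"
begin

text \<open>Matrices are n x n complex matrices; indices are 0-based, so the paper's
  coordinates 1..n correspond to 0..n-1.  The block diag(I_{i-1}, M, I_{n-i-1})
  places the 2x2 matrix M in rows/columns i-1, i (0-based).\<close>

definition blk :: "nat \<Rightarrow> nat \<Rightarrow> complex mat \<Rightarrow> complex mat" where
  "blk n i M = mat n n (\<lambda>(a, b).
     if a \<in> {i - 1, i} \<and> b \<in> {i - 1, i} then M $$ (a - (i - 1), b - (i - 1))
     else if a = b then 1 else 0)"

definition mat2 :: "complex \<Rightarrow> complex \<Rightarrow> complex \<Rightarrow> complex \<Rightarrow> complex mat" where
  "mat2 a b c d = mat_of_rows_list 2 [[a, b], [c, d]]"

definition rho_img :: "nat \<Rightarrow> nat \<Rightarrow> complex mat" where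
  "rho_img n i = blk n i (mat2 0 1 1 0)"

definition sigma_img :: "nat \<Rightarrow> (nat \<Rightarrow> complex) \<Rightarrow> (nat \<Rightarrow> complex) \<Rightarrow>
    (nat \<Rightarrow> complex) \<Rightarrow> (nat \<Rightarrow> complex) \<Rightarrow> nat \<Rightarrow> nat \<Rightarrow> complex mat" where
  "sigma_img n s1 s2 s3 s4 i t = blk n i (mat2 (s1 t) (s2 t) (s3 t) (s4 t))"

definition gen_imgs :: "nat \<Rightarrow> nat \<Rightarrow> (nat \<Rightarrow> complex) \<Rightarrow> (nat \<Rightarrow> complex) \<Rightarrow>
    (nat \<Rightarrow> complex) \<Rightarrow> (nat \<Rightarrow> complex) \<Rightarrow> complex mat set" where
  "gen_imgs n c s1 s2 s3 s4 =
     {rho_img n i | i. 1 \<le> i \<and> i \<le> n - 1} \<union>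
     {sigma_img n s1 s2 s3 s4 i t | i t. 1 \<le> i \<and> i \<le> n - 1 \<and> 1 \<le> t \<and> t \<le> c}"

text \<open>The image of a representation is the subgroup of GL_n generated by the
  images of the generators.\<close>
inductive_set gen_group :: "nat \<Rightarrow> complex mat set \<Rightarrow> complex mat set"
  for n :: nat and S :: "complex mat set" where
  gen: "A \<in> S \<Longrightarrow> A \<in> gen_group n S"
| one: "1\<^sub>m n \<in> gen_group n S"
| mult: "A \<in> gen_group n S \<Longrightarrow> B \<in> gen_group n S \<Longrightarrow> A * B \<in> gen_group n S"
| inv: "A \<in> gen_group n S \<Longrightarrow> B \<in> carrier_mat n n \<Longrightarrow> A * B = 1\<^sub>m n \<Longrightarrow> B \<in> gen_group n S"

definition is_subspace :: "nat \<Rightarrow> complex vec set \<Rightarrow> bool" where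
  "is_subspace n W \<longleftrightarrow> W \<subseteq> carrier_vec n \<and> 0\<^sub>v n \<in> W \<and>
     (\<forall>v\<in>W. \<forall>w\<in>W. v + w \<in> W) \<and> (\<forall>a. \<forall>v\<in>W. a \<cdot>\<^sub>v v \<in> W)"

definition reducible :: "nat \<Rightarrow> complex mat set \<Rightarrow> bool" where
  "reducible n G \<longleftrightarrow> (\<exists>W. is_subspace n W \<and> W \<noteq> {0\<^sub>v n} \<and> W \<noteq> carrier_vec n \<and>
     (\<forall>A\<in>G. \<forall>w\<in>W. A *\<^sub>v w \<in> W))"

end

theory Submission
  imports Defs "Jordan_Normal_Form.Determinant"
begin

lemma mat2_idx: "mat2 a b c d $$ (0,0) = a" "mat2 a b c d $$ (0,1) = b"
  "mat2 a b c d $$ (1,0) = c" "mat2 a b c d $$ (1,1) = d"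
  by (simp_all add: mat2_def mat_of_rows_list_def)

lemma blk_carrier: "blk n i M \<in> carrier_mat n n"
  by (simp add: blk_def)

lemma blk_mult:
  assumes "1 \<le> i" "i < n" "w \<in> carrier_vec n"
  shows "blk n i M *\<^sub>v w = vec n (\<lambda>k. if k = i-1 then M$$(0,0)*w$(i-1) + M$$(0,1)*w$i
     else if k = i then M$$(1,0)*w$(i-1) + M$$(1,1)*w$i else w$k)"
proof (rule eq_vecI)
  show "dim_vec (blk n i M *\<^sub>v w) = dim_vec (vec n (\<lambda>k. if k = i-1 then M$$(0,0)*w$(i-1) + M$$(0,1)*w$i
     else if k = i then M$$(1,0)*w$(i-1) + M$$(1,1)*w$i else w$k))" by (simp add: blk_def)
  fix k assume k: "k < dim_vec (vec n (\<lambda>k. if k = i-1 then M$$(0,0)*w$(i-1) + M$$(0,1)*w$i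
     else if k = i then M$$(1,0)*w$(i-1) + M$$(1,1)*w$i else w$k))"
  hence kn: "k < n" by simp
  have dw: "dim_vec w = n" using assms by simp
  have "(blk n i M *\<^sub>v w) $ k = (\<Sum>b\<in>{0..<n}. blk n i M $$ (k,b) * w $ b)"
    using kn dw by (simp add: blk_def scalar_prod_def)
  also have "\<dots> = (\<Sum>b\<in>{0..<n}. (if b = i-1 then (if k = i-1 then M$$(0,0) else if k = i then M$$(1,0) else if k = b then 1 else 0) * w$(i-1) else 0)
     + (if b = i then (if k = i-1 then M$$(0,1) else if k = i then M$$(1,1) else if k = b then 1 else 0) * w$i else 0)
     + (if b = k then (if k \<noteq> i-1 \<and> k \<noteq> i then w$k else 0) else 0))"
    apply (rule sum.cong[OF refl])
    using assms kn by (auto simp: blk_def)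
  also have "\<dots> = (if k = i-1 then M$$(0,0)*w$(i-1) + M$$(0,1)*w$i
     else if k = i then M$$(1,0)*w$(i-1) + M$$(1,1)*w$i else w$k)"
    using assms kn by (simp add: sum.distrib less_imp_diff_less)
  finally show "(blk n i M *\<^sub>v w) $ k = vec n (\<lambda>k. if k = i-1 then M$$(0,0)*w$(i-1) + M$$(0,1)*w$i
     else if k = i then M$$(1,0)*w$(i-1) + M$$(1,1)*w$i else w$k) $ k" using kn by simp
qed

lemma rho_mult: assumes "1 \<le> i" "i < n" "w \<in> carrier_vec n"
  shows "rho_img n i *\<^sub>v w = vec n (\<lambda>k. if k = i-1 then w$i else if k = i then w$(i-1) else w$k)"
  unfolding rho_img_def blk_mult[OF assms] mat2_idx
  apply (rule eq_vecI)
  using assms by auto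

lemma sigma_mult: assumes "1 \<le> i" "i < n" "w \<in> carrier_vec n"
  shows "sigma_img n s1 s2 s3 s4 i t *\<^sub>v w = vec n (\<lambda>k. if k = i-1 then s1 t * w$(i-1) + s2 t * w$i
     else if k = i then s3 t * w$(i-1) + s4 t * w$i else w$k)"
  unfolding sigma_img_def blk_mult[OF assms] mat2_idx by simp

definition vsum :: "complex vec \<Rightarrow> complex" where
  "vsum v = (\<Sum>j\<in>{0..<dim_vec v}. v $ j)"

definition onev :: "nat \<Rightarrow> complex vec" where "onev n = vec n (\<lambda>_. 1)"

lemma vsum_upd: assumes "1 \<le> i" "i < n" "w \<in> carrier_vec n"
  shows "vsum (vec n (\<lambda>k. if k = i-1 then a else if k = i then b else w$k)) = vsum w - w$(i-1) - w$i + a + b"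
proof -
  have "vsum (vec n (\<lambda>k. if k = i-1 then a else if k = i then b else w$k)) =
     (\<Sum>k\<in>{0..<n}. w$k + (if k = i-1 then a - w$(i-1) else 0) + (if k = i then b - w$i else 0))"
    unfolding vsum_def using assms by (intro sum.cong) auto
  also have "\<dots> = vsum w - w$(i-1) - w$i + a + b"
    using assms by (simp add: sum.distrib vsum_def less_imp_diff_less)
  finally show ?thesis .
qed

lemma vsum_add: "v \<in> carrier_vec n \<Longrightarrow> w \<in> carrier_vec n \<Longrightarrow> vsum (v + w) = vsum v + vsum w"
  by (simp add: vsum_def sum.distrib)

lemma vsum_smult: "vsum (a \<cdot>\<^sub>v v) = a * vsum v"
  by (simp add: vsum_def sum_distrib_left)

lemma vsum_unit: "k < n \<Longrightarrow> vsum (unit_vec n k) = 1"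
  by (simp add: vsum_def unit_vec_def)

lemma gen_group_carrier: assumes "S \<subseteq> carrier_mat n n" "A \<in> gen_group n S"
  shows "A \<in> carrier_mat n n"
  using assms(2) by induction (use assms(1) in auto)

lemma gen_imgs_carrier: "gen_imgs n c s1 s2 s3 s4 \<subseteq> carrier_mat n n"
  by (auto simp: gen_imgs_def rho_img_def sigma_img_def blk_carrier)

lemma rho_in: "1 \<le> i \<Longrightarrow> i \<le> n - 1 \<Longrightarrow> rho_img n i \<in> gen_group n (gen_imgs n c s1 s2 s3 s4)"
  by (rule gen_group.gen) (auto simp: gen_imgs_def)

lemma sigma_in: "1 \<le> i \<Longrightarrow> i \<le> n - 1 \<Longrightarrow> 1 \<le> t \<Longrightarrow> t \<le> c \<Longrightarrow>
   sigma_img n s1 s2 s3 s4 i t \<in> gen_group n (gen_imgs n c s1 s2 s3 s4)"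
  by (rule gen_group.gen) (auto simp: gen_imgs_def)

lemma group_one: assumes "S \<subseteq> carrier_mat n n" "\<forall>A\<in>S. A *\<^sub>v onev n = onev n"
  "A \<in> gen_group n S" shows "A *\<^sub>v onev n = onev n"
  using assms(3)
proof induction
  case (gen A) then show ?case using assms by auto
next
  case one then show ?case by (simp add: onev_def)
next
  case (mult A B)
  have "A \<in> carrier_mat n n" "B \<in> carrier_mat n n"
    using gen_group_carrier[OF assms(1)] mult by auto
  then show ?case using mult by (simp add: onev_def)
next
  case (inv A B)
  have A: "A \<in> carrier_mat n n" using gen_group_carrier[OF assms(1)] inv by auto
  have "B * A = 1\<^sub>m n" using mat_mult_left_right_inverse[OF A inv(2,3)] .
  then have "B *\<^sub>v onev n = B *\<^sub>v (A *\<^sub>v onev n)" using inv.IH by simp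
  also have "\<dots> = (B * A) *\<^sub>v onev n" using A inv(2) by (simp add: onev_def)
  also have "\<dots> = onev n" using \<open>B * A = 1\<^sub>m n\<close> by (simp add: onev_def)
  finally show ?case .
qed

lemma group_sum: assumes "S \<subseteq> carrier_mat n n" "\<forall>A\<in>S. \<forall>v\<in>carrier_vec n. vsum (A *\<^sub>v v) = vsum v"
  "A \<in> gen_group n S" shows "\<forall>v\<in>carrier_vec n. vsum (A *\<^sub>v v) = vsum v"
  using assms(3)
proof induction
  case (gen A) then show ?case using assms by auto
next
  case one then show ?case by simp
next
  case (mult A B)
  have "A \<in> carrier_mat n n" "B \<in> carrier_mat n n"
    using gen_group_carrier[OF assms(1)] mult by auto
  then show ?case using mult by simp
next
  case (inv A B)
  have A: "A \<in> carrier_mat n n" using gen_group_carrier[OF assms(1)] inv by auto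
  show ?case
  proof
    fix v :: "complex vec" assume v: "v \<in> carrier_vec n"
    have "vsum (B *\<^sub>v v) = vsum (A *\<^sub>v (B *\<^sub>v v))" using inv.IH v inv(2) by simp
    also have "\<dots> = vsum ((A * B) *\<^sub>v v)" using A inv(2) v by simp
    also have "\<dots> = vsum v" using inv(3) v by simp
    finally show "vsum (B *\<^sub>v v) = vsum v" .
  qed
qed

lemma sub_closed: "is_subspace n W \<Longrightarrow> v \<in> W \<Longrightarrow> w \<in> W \<Longrightarrow> v + (-1) \<cdot>\<^sub>v w \<in> W"
  unfolding is_subspace_def by blast

lemma lin_closed: "is_subspace n W \<Longrightarrow> v \<in> W \<Longrightarrow> w \<in> W \<Longrightarrow> v + a \<cdot>\<^sub>v w \<in> W"
  unfolding is_subspace_def by blast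

lemma units_all: assumes W: "is_subspace n W" and u: "\<forall>k<n. unit_vec n k \<in> W"
  shows "carrier_vec n \<subseteq> W"
proof
  fix x :: "complex vec" assume x: "x \<in> carrier_vec n"
  have "\<forall>k\<le>n. vec n (\<lambda>j. if j < k then x$j else 0) \<in> W"
  proof (intro allI impI)
    fix k show "k \<le> n \<Longrightarrow> vec n (\<lambda>j. if j < k then x$j else 0) \<in> W"
    proof (induction k)
      case 0
      have "vec n (\<lambda>j. if j < 0 then x$j else 0) = 0\<^sub>v n" by auto
      then show ?case using W unfolding is_subspace_def by simp
    next
      case (Suc k)
      have "vec n (\<lambda>j. if j < Suc k then x$j else 0) =
        vec n (\<lambda>j. if j < k then x$j else 0) + (x$k) \<cdot>\<^sub>v unit_vec n k"
        by (rule eq_vecI) (auto simp: unit_vec_def less_Suc_eq)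
      then show ?case using lin_closed[OF W] Suc u by simp
    qed
  qed
  then have "vec n (\<lambda>j. if j < n then x$j else 0) \<in> W" by blast
  moreover have "vec n (\<lambda>j. if j < n then x$j else 0) = x" using x by (intro eq_vecI) auto
  ultimately show "x \<in> W" by simp
qed

theorem theorem3p4:
  fixes n c :: nat and s1 s2 s3 s4 :: "nat \<Rightarrow> complex"
  assumes "n \<ge> 3" and "c \<ge> 1"
    and "\<forall>t. 1 \<le> t \<and> t \<le> c \<longrightarrow> s1 t * s4 t - s2 t * s3 t \<noteq> 0"
  shows "reducible n (gen_group n (gen_imgs n c s1 s2 s3 s4)) \<longleftrightarrow>
    ((\<forall>t. 1 \<le> t \<and> t \<le> c \<longrightarrow> s1 t + s2 t = 1 \<and> s3 t + s4 t = 1) \<or>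
     (\<forall>t. 1 \<le> t \<and> t \<le> c \<longrightarrow> s1 t + s3 t = 1 \<and> s2 t + s4 t = 1))"
  (is "reducible n ?G \<longleftrightarrow> ?R \<or> ?C")
proof
  have n3: "3 \<le> n" by fact
  let ?S = "gen_imgs n c s1 s2 s3 s4"
  let ?e = "unit_vec n :: nat \<Rightarrow> complex vec"
  assume "reducible n ?G"
  then obtain W where W: "is_subspace n W" and W0: "W \<noteq> {0\<^sub>v n}" and Wc: "W \<noteq> carrier_vec n"
    and inv: "\<forall>A\<in>?G. \<forall>w\<in>W. A *\<^sub>v w \<in> W" unfolding reducible_def by blast
  have Wcar: "W \<subseteq> carrier_vec n" using W unfolding is_subspace_def by blast
  have Wsc: "\<And>a v. v \<in> W \<Longrightarrow> a \<cdot>\<^sub>v v \<in> W" using W unfolding is_subspace_def by blast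
  have Rin: "\<And>b w. 1 \<le> b \<Longrightarrow> b < n \<Longrightarrow> w \<in> W \<Longrightarrow> rho_img n b *\<^sub>v w \<in> W"
  proof -
    fix b w assume "1 \<le> b" "b < n" "w \<in> W"
    then have "rho_img n b \<in> ?G" by (intro rho_in) auto
    then show "rho_img n b *\<^sub>v w \<in> W" using inv \<open>w \<in> W\<close> by blast
  qed
  have Sin: "\<And>t w. 1 \<le> t \<Longrightarrow> t \<le> c \<Longrightarrow> w \<in> W \<Longrightarrow> sigma_img n s1 s2 s3 s4 1 t *\<^sub>v w \<in> W"
  proof -
    fix t w assume "1 \<le> t" "t \<le> c" "w \<in> W"
    then have "sigma_img n s1 s2 s3 s4 1 t \<in> ?G" using n3 by (intro sigma_in) auto
    then show "sigma_img n s1 s2 s3 s4 1 t *\<^sub>v w \<in> W" using inv \<open>w \<in> W\<close> by blast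
  qed
  show "?R \<or> ?C"
  proof (rule ccontr)
    assume nRC: "\<not> (?R \<or> ?C)"
    show False
    proof (cases "\<exists>w\<in>W. \<exists>a. a + 1 < n \<and> w$a \<noteq> w$(a+1)")
      case True
      then obtain w a where w: "w \<in> W" and a: "a + 1 < n" and wa: "w$a \<noteq> w$(a+1)" by blast
      have wc: "w \<in> carrier_vec n" using w Wcar by blast
      have "rho_img n (a+1) *\<^sub>v w + (-1) \<cdot>\<^sub>v w \<in> W" using sub_closed[OF W Rin[OF _ a w] w] by simp
      moreover have "rho_img n (a+1) *\<^sub>v w + (-1) \<cdot>\<^sub>v w = (w$(a+1) - w$a) \<cdot>\<^sub>v (?e a + (-1) \<cdot>\<^sub>v ?e (a+1))"
        using a wc by (intro eq_vecI) (auto simp: rho_mult unit_vec_def)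
      ultimately have "(1 / (w$(a+1) - w$a)) \<cdot>\<^sub>v ((w$(a+1) - w$a) \<cdot>\<^sub>v (?e a + (-1) \<cdot>\<^sub>v ?e (a+1))) \<in> W"
        using Wsc by simp
      moreover have "(1 / (w$(a+1) - w$a)) \<cdot>\<^sub>v ((w$(a+1) - w$a) \<cdot>\<^sub>v (?e a + (-1) \<cdot>\<^sub>v ?e (a+1)))
          = ?e a + (-1) \<cdot>\<^sub>v ?e (a+1)" using wa by (simp add: smult_smult_assoc)
      ultimately have da: "?e a + (-1) \<cdot>\<^sub>v ?e (a+1) \<in> W" by simp
      have down: "\<forall>m\<le>a. ?e (a - m) + (-1) \<cdot>\<^sub>v ?e (a - m + 1) \<in> W"
      proof (intro allI impI)
        fix m show "m \<le> a \<Longrightarrow> ?e (a - m) + (-1) \<cdot>\<^sub>v ?e (a - m + 1) \<in> W"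
        proof (induction m)
          case 0 then show ?case using da by simp
        next
          case (Suc m)
          define b where "b = a - m"
          have b1: "1 \<le> b" "b + 1 < n" "a - Suc m = b - 1" "a - m + 1 = b + 1"
            using Suc.prems a unfolding b_def by auto
          have db: "?e b + (-1) \<cdot>\<^sub>v ?e (b+1) \<in> W" using Suc unfolding b_def by simp
          have "rho_img n b *\<^sub>v (?e b + (-1) \<cdot>\<^sub>v ?e (b+1)) \<in> W" using Rin[OF b1(1) _ db] b1 by simp
          then have "rho_img n b *\<^sub>v (?e b + (-1) \<cdot>\<^sub>v ?e (b+1)) + (-1) \<cdot>\<^sub>v (?e b + (-1) \<cdot>\<^sub>v ?e (b+1)) \<in> W"
            using sub_closed[OF W _ db] by blast
          moreover have "rho_img n b *\<^sub>v (?e b + (-1) \<cdot>\<^sub>v ?e (b+1)) + (-1) \<cdot>\<^sub>v (?e b + (-1) \<cdot>\<^sub>v ?e (b+1))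
             = ?e (b-1) + (-1) \<cdot>\<^sub>v ?e (b - 1 + 1)"
            using b1 by (intro eq_vecI) (auto simp: rho_mult unit_vec_def)
          ultimately show ?case using b1 by simp
        qed
      qed
      have d0: "?e 0 + (-1) \<cdot>\<^sub>v ?e 1 \<in> W" using down[rule_format, of a] by simp
      have "rho_img n 2 *\<^sub>v (?e 0 + (-1) \<cdot>\<^sub>v ?e 1) \<in> W" using Rin[OF _ _ d0] n3 by simp
      moreover have "rho_img n 2 *\<^sub>v (?e 0 + (-1) \<cdot>\<^sub>v ?e 1) = ?e 0 + (-1) \<cdot>\<^sub>v ?e 2"
        using n3 by (intro eq_vecI) (auto simp: rho_mult unit_vec_def)
      ultimately have d02: "?e 0 + (-1) \<cdot>\<^sub>v ?e 2 \<in> W" by simp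
      from nRC obtain t where t: "1 \<le> t" "t \<le> c" and st: "s1 t + s3 t \<noteq> 1 \<or> s2 t + s4 t \<noteq> 1" by blast
      have "?e 0 \<in> W"
      proof (cases "s1 t + s3 t \<noteq> 1")
        case True
        have "sigma_img n s1 s2 s3 s4 1 t *\<^sub>v (?e 0 + (-1) \<cdot>\<^sub>v ?e 2) \<in> W" using Sin[OF t d02] .
        then have "sigma_img n s1 s2 s3 s4 1 t *\<^sub>v (?e 0 + (-1) \<cdot>\<^sub>v ?e 2) + s3 t \<cdot>\<^sub>v (?e 0 + (-1) \<cdot>\<^sub>v ?e 1) \<in> W"
          using lin_closed[OF W _ d0] by blast
        then have "sigma_img n s1 s2 s3 s4 1 t *\<^sub>v (?e 0 + (-1) \<cdot>\<^sub>v ?e 2) + s3 t \<cdot>\<^sub>v (?e 0 + (-1) \<cdot>\<^sub>v ?e 1)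
           + (-1) \<cdot>\<^sub>v (?e 0 + (-1) \<cdot>\<^sub>v ?e 2) \<in> W"
          using sub_closed[OF W _ d02] by blast
        moreover have "sigma_img n s1 s2 s3 s4 1 t *\<^sub>v (?e 0 + (-1) \<cdot>\<^sub>v ?e 2) + s3 t \<cdot>\<^sub>v (?e 0 + (-1) \<cdot>\<^sub>v ?e 1)
           + (-1) \<cdot>\<^sub>v (?e 0 + (-1) \<cdot>\<^sub>v ?e 2) = (s1 t + s3 t - 1) \<cdot>\<^sub>v ?e 0"
          using n3 by (intro eq_vecI) (auto simp: sigma_mult unit_vec_def)
        ultimately have "(1 / (s1 t + s3 t - 1)) \<cdot>\<^sub>v ((s1 t + s3 t - 1) \<cdot>\<^sub>v ?e 0) \<in> W" using Wsc by simp
        then show ?thesis using True by (simp add: smult_smult_assoc)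
      next
        case False
        then have st2: "s2 t + s4 t \<noteq> 1" using st by simp
        have d12: "?e 1 + (-1) \<cdot>\<^sub>v ?e 2 \<in> W"
        proof -
          have "(?e 0 + (-1) \<cdot>\<^sub>v ?e 2) + (-1) \<cdot>\<^sub>v (?e 0 + (-1) \<cdot>\<^sub>v ?e 1) \<in> W" using sub_closed[OF W d02 d0] .
          moreover have "(?e 0 + (-1) \<cdot>\<^sub>v ?e 2) + (-1) \<cdot>\<^sub>v (?e 0 + (-1) \<cdot>\<^sub>v ?e 1) = ?e 1 + (-1) \<cdot>\<^sub>v ?e 2"
            by (intro eq_vecI) (auto simp: unit_vec_def)
          ultimately show ?thesis by simp
        qed
        have "sigma_img n s1 s2 s3 s4 1 t *\<^sub>v (?e 1 + (-1) \<cdot>\<^sub>v ?e 2) \<in> W" using Sin[OF t d12] .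
        then have "sigma_img n s1 s2 s3 s4 1 t *\<^sub>v (?e 1 + (-1) \<cdot>\<^sub>v ?e 2) + (- s2 t) \<cdot>\<^sub>v (?e 0 + (-1) \<cdot>\<^sub>v ?e 1) \<in> W"
          using lin_closed[OF W _ d0] by blast
        then have "sigma_img n s1 s2 s3 s4 1 t *\<^sub>v (?e 1 + (-1) \<cdot>\<^sub>v ?e 2) + (- s2 t) \<cdot>\<^sub>v (?e 0 + (-1) \<cdot>\<^sub>v ?e 1)
           + (-1) \<cdot>\<^sub>v (?e 1 + (-1) \<cdot>\<^sub>v ?e 2) \<in> W"
          using sub_closed[OF W _ d12] by blast
        moreover have "sigma_img n s1 s2 s3 s4 1 t *\<^sub>v (?e 1 + (-1) \<cdot>\<^sub>v ?e 2) + (- s2 t) \<cdot>\<^sub>v (?e 0 + (-1) \<cdot>\<^sub>v ?e 1)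
           + (-1) \<cdot>\<^sub>v (?e 1 + (-1) \<cdot>\<^sub>v ?e 2) = (s2 t + s4 t - 1) \<cdot>\<^sub>v ?e 1"
          using n3 by (intro eq_vecI) (auto simp: sigma_mult unit_vec_def)
        ultimately have "(1 / (s2 t + s4 t - 1)) \<cdot>\<^sub>v ((s2 t + s4 t - 1) \<cdot>\<^sub>v ?e 1) \<in> W" using Wsc by simp
        then have e1: "?e 1 \<in> W" using st2 by (simp add: smult_smult_assoc)
        have "rho_img n 1 *\<^sub>v ?e 1 \<in> W" using Rin[OF _ _ e1] n3 by simp
        moreover have "rho_img n 1 *\<^sub>v ?e 1 = ?e 0"
          using n3 by (intro eq_vecI) (auto simp: rho_mult unit_vec_def)
        ultimately show ?thesis by simp
      qed
      then have "\<forall>k<n. ?e k \<in> W"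
      proof -
        assume e0: "?e 0 \<in> W"
        have "k < n \<Longrightarrow> ?e k \<in> W" for k
        proof (induction k)
          case 0 then show ?case using e0 by simp
        next
          case (Suc k)
          have "rho_img n (Suc k) *\<^sub>v ?e k \<in> W" using Rin[of "Suc k" "?e k"] Suc by simp
          moreover have "rho_img n (Suc k) *\<^sub>v ?e k = ?e (Suc k)"
            using Suc.prems by (intro eq_vecI) (auto simp: rho_mult unit_vec_def)
          ultimately show ?case by simp
        qed
        then show ?thesis by blast
      qed
      then have "carrier_vec n \<subseteq> W" using units_all[OF W] by blast
      then show False using Wc Wcar by blast
    next
      case False
      then have const: "\<And>w a. w \<in> W \<Longrightarrow> a + 1 < n \<Longrightarrow> w$a = w$(a+1)" by blast
      have "\<exists>w\<in>W. w \<noteq> 0\<^sub>v n" using W0 W unfolding is_subspace_def by blast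
      then obtain w where w: "w \<in> W" "w \<noteq> 0\<^sub>v n" by blast
      have wc: "w \<in> carrier_vec n" using w Wcar by blast
      have allk: "k < n \<Longrightarrow> w$k = w$0" for k
      proof (induction k)
        case 0 then show ?case by simp
      next
        case (Suc k) then show ?case using const[OF w(1), of k] by simp
      qed
      have w0: "w$0 \<noteq> 0"
      proof
        assume "w$0 = 0"
        then have "w = 0\<^sub>v n"
        proof (intro eq_vecI)
          fix k assume "w$0 = 0" "k < dim_vec (0\<^sub>v n :: complex vec)"
          then show "w $ k = (0\<^sub>v n :: complex vec) $ k" using allk[of k] by simp
        qed (use wc in simp)
        then show False using w by simp
      qed
      have "(1 / w$0) \<cdot>\<^sub>v w \<in> W" using Wsc w by simp
      moreover have "(1 / w$0) \<cdot>\<^sub>v w = onev n"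
      proof (rule eq_vecI)
        fix k assume "k < dim_vec (onev n)"
        then have "k < n" by (simp add: onev_def)
        then show "((1 / w$0) \<cdot>\<^sub>v w) $ k = onev n $ k" using wc allk[of k] w0 by (simp add: onev_def)
      qed (use wc in \<open>simp add: onev_def\<close>)
      ultimately have one: "onev n \<in> W" by simp
      from nRC obtain t where t: "1 \<le> t" "t \<le> c" and st: "s1 t + s2 t \<noteq> 1 \<or> s3 t + s4 t \<noteq> 1" by blast
      have u: "sigma_img n s1 s2 s3 s4 1 t *\<^sub>v onev n \<in> W" using Sin[OF t one] .
      have "(sigma_img n s1 s2 s3 s4 1 t *\<^sub>v onev n) $ 0 = (sigma_img n s1 s2 s3 s4 1 t *\<^sub>v onev n) $ 1"
        using const[OF u, of 0] n3 by simp
      moreover have "(sigma_img n s1 s2 s3 s4 1 t *\<^sub>v onev n) $ 1 = (sigma_img n s1 s2 s3 s4 1 t *\<^sub>v onev n) $ 2"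
        using const[OF u, of 1] n3 by (simp add: numeral_2_eq_2)
      ultimately show False using st n3 by (simp add: sigma_mult onev_def)
    qed
  qed
next
  have n3: "3 \<le> n" by fact
  let ?S = "gen_imgs n c s1 s2 s3 s4"
  let ?e = "unit_vec n :: nat \<Rightarrow> complex vec"
  have Gc: "\<And>A. A \<in> ?G \<Longrightarrow> A \<in> carrier_mat n n" using gen_group_carrier[OF gen_imgs_carrier] by blast
  assume "?R \<or> ?C"
  then show "reducible n ?G"
  proof
    assume R: ?R
    have gens: "\<forall>A\<in>?S. A *\<^sub>v onev n = onev n"
    proof
      fix A assume "A \<in> ?S"
      then consider (r) i where "1 \<le> i" "i \<le> n - 1" "A = rho_img n i"
        | (s) i t where "1 \<le> i" "i \<le> n - 1" "1 \<le> t" "t \<le> c" "A = sigma_img n s1 s2 s3 s4 i t"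
        unfolding gen_imgs_def by blast
      then show "A *\<^sub>v onev n = onev n"
      proof cases
        case r then show ?thesis using n3 by (intro eq_vecI) (auto simp: rho_mult onev_def)
      next
        case s then show ?thesis using n3 R by (intro eq_vecI) (auto simp: sigma_mult onev_def)
      qed
    qed
    let ?W = "{a \<cdot>\<^sub>v onev n | a. True}"
    show ?thesis unfolding reducible_def
    proof (intro exI conjI)
      show "is_subspace n ?W" unfolding is_subspace_def
      proof (intro conjI ballI allI)
        show "?W \<subseteq> carrier_vec n" by (auto simp: onev_def)
        show "0\<^sub>v n \<in> ?W" by (rule CollectI, rule exI[of _ 0]) (auto simp: onev_def)
        fix v w assume "v \<in> ?W" "w \<in> ?W"
        then obtain a b where "v = a \<cdot>\<^sub>v onev n" "w = b \<cdot>\<^sub>v onev n" by blast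
        then show "v + w \<in> ?W" by (intro CollectI exI[of _ "a + b"]) (auto simp: onev_def)
      next
        fix a v assume "v \<in> ?W"
        then obtain b where "v = b \<cdot>\<^sub>v onev n" by blast
        then show "a \<cdot>\<^sub>v v \<in> ?W" by (intro CollectI exI[of _ "a * b"]) (auto simp: onev_def)
      qed
      show "?W \<noteq> {0\<^sub>v n}"
      proof
        assume "?W = {0\<^sub>v n}"
        then have "1 \<cdot>\<^sub>v onev n = 0\<^sub>v n" by blast
        then have "(1 \<cdot>\<^sub>v onev n) $ 0 = (0\<^sub>v n :: complex vec) $ 0" by simp
        then show False using n3 by (simp add: onev_def)
      qed
      show "?W \<noteq> carrier_vec n"
      proof
        assume "?W = carrier_vec n"
        then have "?e 0 \<in> ?W" by simp
        then obtain a where "?e 0 = a \<cdot>\<^sub>v onev n" by blast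
        then have "?e 0 $ 0 = (a \<cdot>\<^sub>v onev n) $ 0" "?e 0 $ 1 = (a \<cdot>\<^sub>v onev n) $ 1" by simp_all
        then show False using n3 by (simp add: onev_def)
      qed
      show "\<forall>A\<in>?G. \<forall>w\<in>?W. A *\<^sub>v w \<in> ?W"
      proof (intro ballI)
        fix A w assume A: "A \<in> ?G" and "w \<in> ?W"
        then obtain a where w: "w = a \<cdot>\<^sub>v onev n" by blast
        have "A *\<^sub>v w = a \<cdot>\<^sub>v (A *\<^sub>v onev n)" unfolding w
          using mult_mat_vec[OF Gc[OF A]] by (simp add: onev_def)
        also have "\<dots> = a \<cdot>\<^sub>v onev n" using group_one[OF gen_imgs_carrier gens A] by simp
        finally show "A *\<^sub>v w \<in> ?W" by blast
      qed
    qed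
  next
    assume C: ?C
    have gens: "\<forall>A\<in>?S. \<forall>v\<in>carrier_vec n. vsum (A *\<^sub>v v) = vsum v"
    proof (intro ballI)
      fix A and v :: "complex vec" assume "A \<in> ?S" and v: "v \<in> carrier_vec n"
      then consider (r) i where "1 \<le> i" "i \<le> n - 1" "A = rho_img n i"
        | (s) i t where "1 \<le> i" "i \<le> n - 1" "1 \<le> t" "t \<le> c" "A = sigma_img n s1 s2 s3 s4 i t"
        unfolding gen_imgs_def by blast
      then show "vsum (A *\<^sub>v v) = vsum v"
      proof cases
        case r
        then have "i < n" using n3 by linarith
        then have "vsum (rho_img n i *\<^sub>v v) = vsum v - v$(i-1) - v$i + v$i + v$(i-1)"
          by (simp only: rho_mult[OF r(1) _ v] vsum_upd[OF r(1) _ v])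
        then show ?thesis using r by simp
      next
        case s
        then have i: "i < n" using n3 by linarith
        have "vsum (A *\<^sub>v v) = vsum v - v$(i-1) - v$i + (s1 t * v$(i-1) + s2 t * v$i) + (s3 t * v$(i-1) + s4 t * v$i)"
          unfolding s(5) by (simp only: sigma_mult[OF s(1) i v] vsum_upd[OF s(1) i v])
        also have "\<dots> = vsum v - v$(i-1) - v$i + (s1 t + s3 t) * v$(i-1) + (s2 t + s4 t) * v$i"
          by (simp add: algebra_simps)
        also have "\<dots> = vsum v" using C s by simp
        finally show ?thesis .
      qed
    qed
    let ?W = "{v \<in> carrier_vec n. vsum v = 0}"
    show ?thesis unfolding reducible_def
    proof (intro exI conjI)
      show "is_subspace n ?W" unfolding is_subspace_def
        by (auto simp: vsum_add vsum_smult) (simp add: vsum_def)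
      show "?W \<noteq> {0\<^sub>v n}"
      proof
        assume a: "?W = {0\<^sub>v n}"
        have "vsum (?e 0 + (-1) \<cdot>\<^sub>v ?e 1) = vsum (?e 0) + (-1) * vsum (?e 1)"
          by (simp add: vsum_add[of _ n] vsum_smult)
        then have "vsum (?e 0 + (-1) \<cdot>\<^sub>v ?e 1) = 0" using n3 vsum_unit[of 0 n] vsum_unit[of 1 n] by simp
        then have "?e 0 + (-1) \<cdot>\<^sub>v ?e 1 \<in> ?W" by simp
        then have "?e 0 + (-1) \<cdot>\<^sub>v ?e 1 = 0\<^sub>v n" using a by blast
        then have "(?e 0 + (-1) \<cdot>\<^sub>v ?e 1) $ 0 = (0\<^sub>v n :: complex vec) $ 0" by simp
        then show False using n3 by simp
      qed
      show "?W \<noteq> carrier_vec n"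
      proof
        assume "?W = carrier_vec n"
        then have "?e 0 \<in> ?W" by simp
        then show False using n3 by (simp add: vsum_unit)
      qed
      show "\<forall>A\<in>?G. \<forall>w\<in>?W. A *\<^sub>v w \<in> ?W"
        using group_sum[OF gen_imgs_carrier gens] Gc by (auto intro: mult_mat_vec_carrier)
    qed
  qed
qed

end
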